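(* Let $g\ge0$, $n\ge0$ with $n+2g-2>0$, $K\ge2$ an integer, and $1\le\alpha_1,\dots,\alpha_n\le K-1$ integers. Define $$N^g_{\{\alpha\}}=\Big(\frac K2\Big)^{g-1}\sum_{\beta=1}^{K-1}\frac{\prod_{j=1}^n\sin(\pi\beta\alpha_j/K)}{\sin^{n+2g-2}(\pi\beta/K)}.$$ If $n+\sum_j\alpha_j$ is odd then $N^g_{\{\alpha\}}=0$. If $n+\sum_j\alpha_j$ is even then $$N^g_{\{\alpha\}}=-4\pi\Big(\frac K2\Big)^g\Bigg[\operatorname{Res}_{\phi=0}\frac{\prod_j\sin(2\pi\alpha_j\phi)}{\sin^{n+2g-2}(2\pi\phi)}\cot(2\pi K\phi)-\Big(\frac i2\Big)^{n-1}\sum_{\mu\in\{\pm1\}^n}\Big(\prod_j\mu_j\Big)\operatorname{sign}(A_\mu)\!\!\sum_{\substack{m\in\mathbb Z\\0\le m<|A_\mu|/(2K)}}\!\!\frac{1}{\sigma(m)}\operatorname{Res}_{\phi=0}\frac{\exp\big[2\pi i\phi\operatorname{sign}(A_\mu)(2Km-|A_\mu|)\big]}{\sin^{n+2g-2}(2\pi\phi)}\Bigg],$$ where $A_\mu=\sum_j\mu_j\alpha_j$.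
   Context: $N^g_{\{\alpha\}}$ is the Verlinde number (number of conformal blocks of the $SU(2)$ WZW model at level $k=K-2$ on a genus-$g$ surface with $n$ primary fields of dimensions $\alpha_j$). $\sigma(m)=2$ if $m=0$ and $1$ otherwise; $\operatorname{sign}(0)=0$; $\operatorname{Res}_{\phi=0}$ denotes the residue at $\phi=0$. *)

theory Defs
  imports "HOL-Complex_Analysis.Complex_Analysis"
begin

text \<open>Verlinde number N^g_{alpha} for SU(2) at level K-2; alpha indexed by 0..<n.\<close>
definition verlinde :: "nat \<Rightarrow> nat \<Rightarrow> nat \<Rightarrow> (nat \<Rightarrow> nat) \<Rightarrow> real" where
  "verlinde K g n \<alpha> =
     (real K / 2) powi (int g - 1) *
     (\<Sum>\<beta> = 1..K - 1.
        (\<Prod>j<n. sin (pi * real \<beta> * real (\<alpha> j) / real K)) /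
        sin (pi * real \<beta> / real K) ^ (n + 2 * g - 2))"

definition sigma_m :: "int \<Rightarrow> complex" where
  "sigma_m m = (if m = 0 then 2 else 1)"

end

theory Submission
  imports Defs "HOL-Real_Asymp.Real_Asymp"
begin
definition Mset :: "nat \<Rightarrow> int \<Rightarrow> int set" where
  "Mset K A = {m::int. 0 \<le> m \<and> real_of_int m < real_of_int \<bar>A\<bar> / (2 * real K)}"

definition Ef :: "nat \<Rightarrow> int \<Rightarrow> int \<Rightarrow> complex \<Rightarrow> complex" where
  "Ef K A m \<phi> = exp (2 * complex_of_real pi * \<i> * \<phi> * of_int (sgn A) * of_int (2 * int K * m - \<bar>A\<bar>))"

definition Qf :: "nat \<Rightarrow> int \<Rightarrow> complex \<Rightarrow> complex" where
  "Qf K A \<phi> = (\<Sum>m\<in>Mset K A. 1 / sigma_m m * Ef K A m \<phi>)"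

definition Sf :: "nat \<Rightarrow> complex \<Rightarrow> complex" where
  "Sf p \<phi> = sin (2 * complex_of_real pi * \<phi>) ^ p"

definition Fa :: "nat \<Rightarrow> nat \<Rightarrow> int \<Rightarrow> complex \<Rightarrow> complex" where
  "Fa K p A \<phi> = exp (- (2 * complex_of_real pi * \<i> * of_int A * \<phi>)) *
      cot (2 * complex_of_real pi * of_nat K * \<phi>) / Sf p \<phi>"

definition Tf :: "nat \<Rightarrow> nat \<Rightarrow> int \<Rightarrow> complex \<Rightarrow> complex" where
  "Tf K p A \<phi> = Fa K p A \<phi> - (-2 * \<i>) * of_int (sgn A) * Qf K A \<phi> / Sf p \<phi>"

lemma finite_Mset: "finite (Mset K A)"
proof -
  have "Mset K A \<subseteq> {0..\<bar>A\<bar>}"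
  proof
    fix m assume "m \<in> Mset K A"
    hence m: "0 \<le> m" "real_of_int m < real_of_int \<bar>A\<bar> / (2 * real K)" by (auto simp: Mset_def)
    have "real_of_int \<bar>A\<bar> / (2 * real K) \<le> real_of_int \<bar>A\<bar>"
    proof (cases "K = 0")
      case False
      hence "1 * real_of_int \<bar>A\<bar> \<le> (2 * real K) * real_of_int \<bar>A\<bar>"
        by (intro mult_right_mono) auto
      thus ?thesis using False by (simp add: divide_le_eq mult.commute)
    qed simp
    with m show "m \<in> {0..\<bar>A\<bar>}" by auto
  qed
  thus ?thesis by (rule finite_subset) auto
qed

lemma Mset_uminus [simp]: "Mset K (-A) = Mset K A"
  by (simp add: Mset_def)

lemma Mset_iff: "K > 0 \<Longrightarrow> m \<in> Mset K A \<longleftrightarrow> 0 \<le> m \<and> 2 * int K * m < \<bar>A\<bar>"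
proof -
  assume K: "K > 0"
  have "real_of_int m < real_of_int \<bar>A\<bar> / (2 * real K) \<longleftrightarrow> real_of_int (2 * int K * m) < real_of_int \<bar>A\<bar>"
    using K by (simp add: field_simps)
  also have "\<dots> \<longleftrightarrow> 2 * int K * m < \<bar>A\<bar>" by linarith
  finally show ?thesis by (simp add: Mset_def)
qed

lemma sin_2piK_eq_0:
  assumes "K > 0"
  shows "sin (2 * complex_of_real pi * of_nat K * w) = 0 \<longleftrightarrow> (\<exists>k::int. w = of_int k / (2 * of_nat K))"
proof -
  have "sin (2 * complex_of_real pi * of_nat K * w) = 0 \<longleftrightarrow>
        (\<exists>k::int. 2 * complex_of_real pi * of_nat K * w = of_real (of_int k * pi))"
    by (rule sin_eq_0)
  also have "\<dots> \<longleftrightarrow> (\<exists>k::int. w = of_int k / (2 * of_nat K))"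
  proof -
    have "2 * complex_of_real pi * of_nat K * w = of_real (of_int k * pi) \<longleftrightarrow> w = of_int k / (2 * of_nat K)" for k :: int
      using assms pi_gt_zero by (auto simp: field_simps)
    thus ?thesis by simp
  qed
  finally show ?thesis .
qed

lemma sin_2pi_eq_0_imp:
  assumes "sin (2 * complex_of_real pi * w) = 0"
  shows "sin (2 * complex_of_real pi * of_nat K * w) = 0"
proof -
  from assms obtain k :: int where k: "2 * complex_of_real pi * w = of_real (of_int k * pi)"
    by (auto simp: sin_eq_0)
  have "2 * complex_of_real pi * of_nat K * w = of_real (of_int (int K * k) * pi)"
    using k by (simp add: algebra_simps)
  thus ?thesis by (subst sin_eq_0) blast
qed

lemma exp_pi_int: "exp (complex_of_real pi * \<i> * of_int k) = (if even k then 1 else -1)"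
proof (cases "even k")
  case True
  then obtain j where kj: "k = 2 * j" by blast
  have "exp (complex_of_real pi * \<i> * of_int k) = exp (\<i> * (of_int j * (of_real pi * 2)))"
    by (simp add: kj mult_ac)
  thus ?thesis using True by simp
next
  case False
  then obtain j where kj: "k = 2 * j + 1" by (metis oddE)
  have "exp (complex_of_real pi * \<i> * of_int k) = exp (\<i> * (of_int j * (of_real pi * 2)) + of_real pi * \<i>)"
    by (simp add: kj algebra_simps)
  also have "\<dots> = exp (\<i> * (of_int j * (of_real pi * 2))) * exp (of_real pi * \<i>)"
    by (rule exp_add)
  finally show ?thesis using False by simp
qed

lemma sin_plus_pi_c: "sin (z + complex_of_real pi) = - sin (z::complex)"
  by (simp add: sin_add)

lemma cot_plus_npi: "cot (z + of_nat K * complex_of_real pi) = cot (z::complex)"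
proof (induction K)
  case 0 then show ?case by simp
next
  case (Suc K)
  have "z + of_nat (Suc K) * complex_of_real pi = (z + of_nat K * complex_of_real pi) + complex_of_real pi"
    by (simp add: algebra_simps)
  also have "cot \<dots> = cot (z + of_nat K * complex_of_real pi)"
    by (simp add: cot_def sin_add cos_add)
  finally show ?case using Suc by simp
qed

lemma Tf_periodic:
  assumes "K > 0" and par: "even (A + int p)"
  shows "Tf K p A (w + 1/2) = Tf K p A w"
proof -
  define \<epsilon> :: complex where "\<epsilon> = (if even A then 1 else -1)"
  have \<epsilon>nz: "\<epsilon> \<noteq> 0" by (simp add: \<epsilon>_def)
  have pA: "even p \<longleftrightarrow> even A" using par by (cases "even A") auto
  have S: "Sf p (w + 1/2) = \<epsilon> * Sf p w"
  proof -
    have "sin (2 * complex_of_real pi * (w + 1/2)) = - sin (2 * complex_of_real pi * w)"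
      using sin_plus_pi_c[of "2 * complex_of_real pi * w"] by (simp add: algebra_simps)
    hence "Sf p (w + 1/2) = (- sin (2 * complex_of_real pi * w)) ^ p" by (simp add: Sf_def)
    hence "Sf p (w + 1/2) = (-1) ^ p * Sf p w"
      by (simp only: Sf_def power_minus[of "sin (2 * complex_of_real pi * w)"])
    thus ?thesis using pA by (simp add: \<epsilon>_def)
  qed
  have E: "exp (- (2 * complex_of_real pi * \<i> * of_int A * (w + 1/2))) =
           exp (- (2 * complex_of_real pi * \<i> * of_int A * w)) * \<epsilon>"
  proof -
    have "- (2 * complex_of_real pi * \<i> * of_int A * (w + 1/2)) =
          - (2 * complex_of_real pi * \<i> * of_int A * w) + complex_of_real pi * \<i> * of_int (-A)"
      by (simp add: algebra_simps)
    hence "exp (- (2 * complex_of_real pi * \<i> * of_int A * (w + 1/2))) =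
           exp (- (2 * complex_of_real pi * \<i> * of_int A * w)) * exp (complex_of_real pi * \<i> * of_int (-A))"
      by (simp only: exp_add)
    moreover have "exp (complex_of_real pi * \<i> * of_int (-A)) = \<epsilon>"
      by (subst exp_pi_int) (simp add: \<epsilon>_def)
    ultimately show ?thesis by simp
  qed
  have C: "cot (2 * complex_of_real pi * of_nat K * (w + 1/2)) = cot (2 * complex_of_real pi * of_nat K * w)"
  proof -
    have "2 * complex_of_real pi * of_nat K * (w + 1/2) = 2 * complex_of_real pi * of_nat K * w + of_nat K * complex_of_real pi"
      by (simp add: algebra_simps)
    thus ?thesis by (simp add: cot_plus_npi)
  qed
  have Q: "of_int (sgn A) * Qf K A (w + 1/2) = \<epsilon> * (of_int (sgn A) * Qf K A w)"
  proof (cases "A = 0")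
    case True then show ?thesis by simp
  next
    case False
    have "Ef K A m (w + 1/2) = Ef K A m w * \<epsilon>" for m
    proof -
      define k where "k = sgn A * (2 * int K * m - \<bar>A\<bar>)"
      have "even k \<longleftrightarrow> even A"
        using False unfolding k_def by (cases "A > 0") (auto simp: sgn_if)
      hence ek: "exp (complex_of_real pi * \<i> * of_int k) = \<epsilon>"
        by (simp add: exp_pi_int \<epsilon>_def)
      have "2 * complex_of_real pi * \<i> * (w + 1/2) * of_int (sgn A) * of_int (2 * int K * m - \<bar>A\<bar>) =
            2 * complex_of_real pi * \<i> * w * of_int (sgn A) * of_int (2 * int K * m - \<bar>A\<bar>)
            + complex_of_real pi * \<i> * of_int k"
        by (simp add: k_def algebra_simps)
      hence "Ef K A m (w + 1/2) = Ef K A m w * exp (complex_of_real pi * \<i> * of_int k)"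
        by (simp only: Ef_def exp_add)
      thus ?thesis by (simp add: ek)
    qed
    hence "Qf K A (w + 1/2) = \<epsilon> * Qf K A w"
      by (simp add: Qf_def sum_distrib_left mult_ac)
    thus ?thesis by (simp add: mult_ac)
  qed
  have Q': "(-2 * \<i>) * of_int (sgn A) * Qf K A (w + 1/2) = \<epsilon> * ((-2 * \<i>) * of_int (sgn A) * Qf K A w)"
    using Q by (simp add: mult_ac)
  have "Tf K p A (w + 1/2) = exp (- (2 * complex_of_real pi * \<i> * of_int A * (w + 1/2))) *
      cot (2 * complex_of_real pi * of_nat K * (w + 1/2)) / Sf p (w + 1/2)
      - (-2 * \<i>) * of_int (sgn A) * Qf K A (w + 1/2) / Sf p (w + 1/2)"
    by (simp only: Tf_def Fa_def)
  also have "\<dots> = (exp (- (2 * complex_of_real pi * \<i> * of_int A * w)) * \<epsilon> *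
      cot (2 * complex_of_real pi * of_nat K * w)) / (\<epsilon> * Sf p w)
      - (\<epsilon> * ((-2 * \<i>) * of_int (sgn A) * Qf K A w)) / (\<epsilon> * Sf p w)"
    by (simp only: S E C Q')
  also have "\<dots> = (\<epsilon> * (exp (- (2 * complex_of_real pi * \<i> * of_int A * w)) *
      cot (2 * complex_of_real pi * of_nat K * w))) / (\<epsilon> * Sf p w)
      - (\<epsilon> * ((-2 * \<i>) * of_int (sgn A) * Qf K A w)) / (\<epsilon> * Sf p w)"
    by (simp only: mult.commute mult.left_commute)
  also have "\<dots> = Tf K p A w"
    unfolding Tf_def Fa_def by (simp only: mult_divide_mult_cancel_left[OF \<epsilon>nz])
  finally show ?thesis .
qed

lemma aux_div1: fixes X Y S d c :: complex
  shows "(- X) / (d * S) - c * (- (Y * Z)) / (d * S) = - (X / S - c * Y * Z / S) / d"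
  by (simp add: diff_divide_distrib divide_divide_eq_left mult.commute)

lemma Tf_uminus:
  shows "Tf K p A (- w) = - Tf K p (- A) w / (-1) ^ p"
proof -
  have "Sf p (- w) = (- sin (2 * complex_of_real pi * w)) ^ p" by (simp add: Sf_def)
  hence S: "Sf p (- w) = (-1) ^ p * Sf p w"
    by (simp only: Sf_def power_minus[of "sin (2 * complex_of_real pi * w)"])
  have E: "Ef K A m (- w) = Ef K (- A) m w" for m
    by (simp add: Ef_def sgn_if)
  have Q: "of_int (sgn A) * Qf K A (- w) = - (of_int (sgn (- A)) * Qf K (- A) w)"
    using E by (simp add: Qf_def sgn_if)
  have "Tf K p A (- w) = (- (exp (- (2 * complex_of_real pi * \<i> * of_int (- A) * w)) *
      cot (2 * complex_of_real pi * of_nat K * w))) / ((-1) ^ p * Sf p w)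
      - (-2 * \<i>) * (- (of_int (sgn (- A)) * Qf K (- A) w)) / ((-1) ^ p * Sf p w)"
    unfolding Tf_def Fa_def S using Q by (simp add: mult_ac)
  also have "\<dots> = - Tf K p (- A) w / (-1) ^ p"
    unfolding Tf_def Fa_def by (rule aux_div1)
  finally show ?thesis .
qed

lemma cot_exp: "cot (z::complex) = \<i> * (exp (2 * \<i> * z) + 1) / (exp (2 * \<i> * z) - 1)"
proof -
  define E where "E = exp (\<i> * z)"
  have E0: "E \<noteq> 0" by (simp add: E_def)
  have e2: "exp (2 * \<i> * z) = E * E"
    by (simp only: E_def exp_add[symmetric]) (simp add: algebra_simps)
  have em: "exp (- (\<i> * z)) = inverse E" by (simp add: E_def exp_minus)
  show ?thesis
  proof (cases "E * E = 1")
    case True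
    hence "E - inverse E = 0" using E0 by (simp add: field_simps)
    hence "sin z = 0" by (simp add: sin_exp_eq em flip: E_def)
    thus ?thesis using True by (simp add: cot_def e2)
  next
    case False
    hence "E - inverse E \<noteq> 0" using E0 by (simp add: field_simps)
    hence "cot z = \<i> * (E * E + 1) / (E * E - 1)" using E0 False
      by (simp add: cot_def sin_exp_eq cos_exp_eq em field_simps flip: E_def)
    thus ?thesis by (simp only: e2)
  qed
qed

lemma Re_lin: "Re (2 * complex_of_real pi * \<i> * w * of_int a * of_int b) = - 2 * pi * Im w * a * b"
  by simp

lemma sin_lower:
  assumes "Im w \<ge> 1"
  shows "exp (2 * pi * Im w) / 4 \<le> norm (sin (2 * complex_of_real pi * w))"
proof -
  define z where "z = 2 * complex_of_real pi * w"
  have Imz: "Im z = 2 * pi * Im w" by (simp add: z_def)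
  have n1: "norm (exp (\<i> * z)) = exp (- (2 * pi * Im w))" by (simp add: norm_exp_eq_Re Imz)
  have n2: "norm (exp (- (\<i> * z))) = exp (2 * pi * Im w)" by (simp add: norm_exp_eq_Re Imz)
  have "exp (- (2 * pi * Im w)) \<le> 1" using assms pi_gt_zero by simp
  moreover have "2 \<le> exp (2 * pi * Im w)"
  proof -
    have "1 + 2 * pi * Im w \<le> exp (2 * pi * Im w)" by (rule exp_ge_add_one_self)
    moreover have "2 * pi * Im w \<ge> 1" using assms pi_gt3 by (smt (verit) mult_le_cancel_left1 mult_nonneg_nonneg)
    ultimately show ?thesis by linarith
  qed
  moreover have "norm (exp (- (\<i> * z))) - norm (exp (\<i> * z)) \<le> norm (exp (\<i> * z) - exp (- (\<i> * z)))"
    by (metis norm_minus_commute norm_triangle_ineq2)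
  ultimately have "exp (2 * pi * Im w) / 2 \<le> norm (exp (\<i> * z) - exp (- (\<i> * z)))"
    using n1 n2 by linarith
  moreover have "norm (sin z) = norm (exp (\<i> * z) - exp (- (\<i> * z))) / 2"
    by (simp add: sin_exp_eq norm_divide norm_mult)
  ultimately show ?thesis unfolding z_def by linarith
qed

lemma div_Sf_bound:
  assumes "Im w \<ge> 1" "p \<ge> 1"
  shows "norm (X / Sf p w) \<le> norm X * 4 ^ p * exp (- 2 * pi * Im w)"
proof -
  define s where "s = norm (sin (2 * complex_of_real pi * w))"
  define y where "y = exp (2 * pi * Im w)"
  have ypos: "y > 0" by (simp add: y_def)
  have sl: "y / 4 \<le> s" using sin_lower[OF assms(1)] by (simp add: s_def y_def)
  have y1: "1 \<le> y" using assms(1) pi_gt_zero by (simp add: y_def)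
  have "(y / 4) ^ p \<le> s ^ p" using sl ypos by (intro power_mono) auto
  have spos: "s > 0" using sl ypos by linarith
  have "norm (X / Sf p w) = norm X / s ^ p" by (simp add: Sf_def s_def norm_divide norm_power)
  also have "\<dots> \<le> norm X / (y / 4) ^ p"
    using \<open>(y / 4) ^ p \<le> s ^ p\<close> ypos spos by (intro divide_left_mono) auto
  also have "\<dots> = norm X * 4 ^ p / y ^ p" by (simp add: power_divide)
  also have "\<dots> \<le> norm X * 4 ^ p / y"
  proof -
    have "y ^ 1 \<le> y ^ p" using y1 assms(2) by (intro power_increasing) auto
    thus ?thesis using ypos by (intro divide_left_mono) auto
  qed
  also have "\<dots> = norm X * 4 ^ p * exp (- 2 * pi * Im w)"
    by (simp add: y_def exp_minus field_simps)
  finally show ?thesis .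
qed

lemma cot_frac_bound:
  assumes "norm (u::complex) \<le> 1/2"
  shows "norm (\<i> * (u + 1) / (u - 1)) \<le> 3"
proof -
  have "norm (u + 1) \<le> 3/2" using assms norm_triangle_ineq[of u 1] by simp
  moreover have "1/2 \<le> norm (u - 1)" using assms norm_triangle_ineq2[of 1 u]
    by (simp add: norm_minus_commute)
  ultimately have "norm (u + 1) / norm (u - 1) \<le> (3/2) / (1/2)"
    by (intro frac_le) auto
  thus ?thesis by (simp add: norm_divide norm_mult)
qed

lemma u_small:
  assumes "Im w \<ge> 1" "K > 0"
  shows "norm (exp (2 * \<i> * (2 * complex_of_real pi * of_nat K * w))) \<le> 1/2"
proof -
  have "norm (exp (2 * \<i> * (2 * complex_of_real pi * of_nat K * w))) = exp (- (4 * pi * real K * Im w))"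
    by (simp add: norm_exp_eq_Re)
  also have "\<dots> \<le> exp (- 1)"
  proof -
    have "1 \<le> 4 * pi * real K * Im w"
    proof -
      have "1 \<le> real K" using assms by simp
      hence "1 * 1 \<le> real K * Im w" using assms by (intro mult_mono) auto
      moreover have "1 \<le> 4 * pi" using pi_gt3 by simp
      ultimately have "1 * 1 \<le> (4 * pi) * (real K * Im w)" by (intro mult_mono) auto
      thus ?thesis by (simp add: mult_ac)
    qed
    thus ?thesis by simp
  qed
  also have "\<dots> \<le> 1/2"
  proof -
    have "2 \<le> exp (1::real)" using exp_ge_add_one_self[of 1] by simp
    thus ?thesis by (simp add: exp_minus field_simps)
  qed
  finally show ?thesis .
qed

lemma cot_bound:
  assumes "Im w \<ge> 1" "K > 0"
  shows "norm (cot (2 * complex_of_real pi * of_nat K * w)) \<le> 3"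
  unfolding cot_exp[of "2 * complex_of_real pi * of_nat K * w"]
  by (rule cot_frac_bound[OF u_small[OF assms]])

lemma geom_sigma:
  assumes "u \<noteq> 1" "M \<ge> 1"
  shows "(u + 1) / (u - 1) + 2 * (\<Sum>j<M. 1 / sigma_m (int j) * u ^ j) = 2 * u ^ M / (u - 1)"
  using assms(2)
proof (induction M rule: dec_induct)
  case base
  have "u - 1 \<noteq> 0" using assms by simp
  thus ?case by (simp add: sigma_m_def field_simps)
next
  case (step M)
  have "u - 1 \<noteq> 0" using assms by simp
  have "sigma_m (int M) = 1" using step by (simp add: sigma_m_def)
  hence "(u + 1) / (u - 1) + 2 * (\<Sum>j<Suc M. 1 / sigma_m (int j) * u ^ j) =
         2 * u ^ M / (u - 1) + 2 * u ^ M"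
    using step.IH by (simp add: algebra_simps)
  also have "\<dots> = 2 * u ^ Suc M / (u - 1)" using \<open>u - 1 \<noteq> 0\<close> by (simp add: field_simps)
  finally show ?case .
qed

lemma Mset_pos:
  assumes "A > 0" "K > 0"
  defines "M \<equiv> nat ((A - 1) div (2 * int K) + 1)"
  shows "Mset K A = int ` {..<M}" and "A \<le> 2 * int K * int M" and "M \<ge> 1"
proof -
  define q where "q = (A - 1) div (2 * int K)"
  define r where "r = (A - 1) mod (2 * int K)"
  have qr: "A - 1 = 2 * int K * q + r" by (simp add: q_def r_def)
  have r: "0 \<le> r" "r < 2 * int K" using assms by (simp_all add: r_def)
  have q0: "q \<ge> 0" using assms by (simp add: q_def pos_imp_zdiv_nonneg_iff)
  have M: "int M = q + 1" using q0 by (simp add: M_def q_def)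
  show "M \<ge> 1" using M q0 by simp
  have key: "2 * int K * m < A \<longleftrightarrow> m < q + 1" for m
  proof
    assume h: "2 * int K * m < A"
    show "m < q + 1"
    proof (rule ccontr)
      assume "\<not> m < q + 1"
      hence "2 * int K * (q + 1) \<le> 2 * int K * m" using assms by (intro mult_left_mono) auto
      thus False using h qr r by (simp add: algebra_simps)
    qed
  next
    assume "m < q + 1"
    hence "2 * int K * m \<le> 2 * int K * q" using assms by (intro mult_left_mono) auto
    thus "2 * int K * m < A" using qr r by linarith
  qed
  show "Mset K A = int ` {..<M}"
  proof (rule set_eqI)
    fix m :: int
    have "m \<in> int ` {..<M} \<longleftrightarrow> 0 \<le> m \<and> m < int M"
      by (auto simp: image_iff intro!: bexI[of _ "nat m"])
    thus "m \<in> Mset K A \<longleftrightarrow> m \<in> int ` {..<M}"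
      using Mset_iff[OF assms(2)] key M assms(1) by auto
  qed
  show "A \<le> 2 * int K * int M" using M qr r by (simp add: algebra_simps)
qed

definition Nf :: "nat \<Rightarrow> int \<Rightarrow> complex \<Rightarrow> complex" where
  "Nf K A w = exp (- (2 * complex_of_real pi * \<i> * of_int A * w)) * cot (2 * complex_of_real pi * of_nat K * w)
     - (-2 * \<i>) * of_int (sgn A) * Qf K A w"

lemma Tf_eq_div: "Tf K p A w = Nf K A w / Sf p w"
  by (simp add: Tf_def Fa_def Nf_def diff_divide_distrib add_divide_distrib)

lemma norm_sigma_inv: "norm (1 / sigma_m m) \<le> 1"
  by (simp add: sigma_m_def)

lemma Nf_bound:
  assumes "K > 0" "Im w \<ge> 1"
  shows "norm (Nf K A w) \<le> 4 + 2 * real (card (Mset K A))"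
proof -
  define u where "u = exp (2 * \<i> * (2 * complex_of_real pi * of_nat K * w))"
  define e where "e = exp (- (2 * complex_of_real pi * \<i> * of_int A * w))"
  have cotu: "cot (2 * complex_of_real pi * of_nat K * w) = \<i> * (u + 1) / (u - 1)"
    by (simp add: u_def cot_exp)
  have us: "norm u \<le> 1/2" unfolding u_def by (rule u_small[OF assms(2,1)])
  have u1: "u \<noteq> 1" using us by auto
  have nu1: "1/2 \<le> norm (u - 1)" using us norm_triangle_ineq2[of 1 u]
    by (simp add: norm_minus_commute)
  have cb: "norm (cot (2 * complex_of_real pi * of_nat K * w)) \<le> 3" by (rule cot_bound[OF assms(2,1)])
  have ne: "norm e = exp (2 * pi * real_of_int A * Im w)" by (simp add: e_def norm_exp_eq_Re)
  have nu: "norm u = exp (- (4 * pi * real K * Im w))" by (simp add: u_def norm_exp_eq_Re)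
  consider "A > 0" | "A = 0" | "A < 0" by linarith
  thus ?thesis
  proof cases
    case 1
    define M where "M = nat ((A - 1) div (2 * int K) + 1)"
    have MS: "Mset K A = int ` {..<M}" and AM: "A \<le> 2 * int K * int M" and M1: "M \<ge> 1"
      using Mset_pos[OF 1 assms(1)] by (simp_all add: M_def)
    have Ef_eq: "Ef K A (int j) w = e * u ^ j" for j
    proof -
      have "2 * complex_of_real pi * \<i> * w * of_int (sgn A) * of_int (2 * int K * int j - \<bar>A\<bar>) =
            - (2 * complex_of_real pi * \<i> * of_int A * w) + of_nat j * (2 * \<i> * (2 * complex_of_real pi * of_nat K * w))"
        using 1 by (simp add: algebra_simps)
      thus ?thesis by (simp only: Ef_def exp_add exp_of_nat_mult e_def u_def)
    qed
    define Sg where "Sg = (\<Sum>j<M. 1 / sigma_m (int j) * u ^ j)"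
    have "Qf K A w = (\<Sum>j<M. 1 / sigma_m (int j) * (e * u ^ j))"
      unfolding Qf_def MS by (subst sum.reindex) (auto simp: inj_on_def Ef_eq)
    hence Q2: "Qf K A w = e * Sg" by (simp add: Sg_def sum_distrib_left mult_ac)
    have "Nf K A w = e * (\<i> * (u + 1) / (u - 1)) - (-2 * \<i>) * of_int (sgn A) * (e * Sg)"
      unfolding Nf_def e_def[symmetric] cotu Q2 ..
    also have "\<dots> = \<i> * e * ((u + 1) / (u - 1) + 2 * Sg)"
      using 1 by (simp add: algebra_simps)
    also have "\<dots> = \<i> * e * (2 * u ^ M / (u - 1))" unfolding Sg_def geom_sigma[OF u1 M1] ..
    finally have Neq: "Nf K A w = 2 * \<i> * (e * u ^ M) / (u - 1)" by simp
    have "norm (e * u ^ M) = exp (2 * pi * Im w * (real_of_int A - 2 * real K * real M))"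
    proof -
      have "norm (e * u ^ M) = exp (2 * pi * real_of_int A * Im w) * exp (- (4 * pi * real K * Im w)) ^ M"
        by (simp add: norm_mult norm_power ne nu)
      also have "exp (- (4 * pi * real K * Im w)) ^ M = exp (real M * (- (4 * pi * real K * Im w)))"
        by (rule exp_of_nat_mult[symmetric])
      also have "exp (2 * pi * real_of_int A * Im w) * exp (real M * (- (4 * pi * real K * Im w))) =
           exp (2 * pi * real_of_int A * Im w + real M * (- (4 * pi * real K * Im w)))"
        by (rule exp_add[symmetric])
      also have "\<dots> = exp (2 * pi * Im w * (real_of_int A - 2 * real K * real M))"
        by (rule arg_cong[where f=exp]) (simp add: algebra_simps)
      finally show ?thesis .
    qed
    also have "\<dots> \<le> exp 0"
    proof -
      have "real_of_int A \<le> real_of_int (2 * int K * int M)" using AM by (subst of_int_le_iff)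
      hence "real_of_int A \<le> 2 * real K * real M" by simp
      hence "2 * pi * Im w * (real_of_int A - 2 * real K * real M) \<le> 0"
        using assms(2) pi_gt_zero by (intro mult_nonneg_nonpos) auto
      thus ?thesis by simp
    qed
    finally have neu: "norm (e * u ^ M) \<le> 1" by simp
    have "norm (Nf K A w) = 2 * norm (e * u ^ M) / norm (u - 1)"
      by (simp add: Neq norm_mult norm_divide)
    also have "\<dots> \<le> 2 * 1 / (1/2)"
      using neu nu1 by (intro frac_le) auto
    finally show ?thesis by simp
  next
    case 2
    thus ?thesis using cb by (simp add: Nf_def)
  next
    case 3
    have ne1: "norm e \<le> 1"
    proof -
      have "2 * pi * real_of_int A * Im w \<le> 0"
        using 3 assms(2) pi_gt_zero by (intro mult_nonpos_nonneg mult_nonneg_nonpos) auto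
      thus ?thesis by (simp add: ne)
    qed
    have Ef1: "norm (Ef K A m w) \<le> 1" if "m \<in> Mset K A" for m
    proof -
      have "2 * int K * m < \<bar>A\<bar>" using that Mset_iff[OF assms(1)] by auto
      hence "2 * int K * m - \<bar>A\<bar> \<le> 0" by simp
      hence "real_of_int (2 * int K * m - \<bar>A\<bar>) \<le> 0" by (simp only: of_int_le_0_iff)
      hence "- 2 * pi * Im w * real_of_int (sgn A) * real_of_int (2 * int K * m - \<bar>A\<bar>) \<le> 0"
        using 3 assms(2) pi_gt_zero by (simp add: mult_nonneg_nonpos)
      thus ?thesis unfolding Ef_def norm_exp_eq_Re Re_lin by simp
    qed
    have nQ: "norm (Qf K A w) \<le> real (card (Mset K A))"
    proof -
      have "norm (Qf K A w) \<le> (\<Sum>m\<in>Mset K A. norm (1 / sigma_m m * Ef K A m w))"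
        unfolding Qf_def by (rule norm_sum)
      also have "\<dots> \<le> (\<Sum>m\<in>Mset K A. 1)"
      proof (rule sum_mono)
        fix m assume "m \<in> Mset K A"
        thus "norm (1 / sigma_m m * Ef K A m w) \<le> 1"
          unfolding norm_mult using norm_sigma_inv[of m] Ef1[of m]
          by (metis mult_le_one norm_ge_zero)
      qed
      finally show ?thesis by simp
    qed
    have "Nf K A w = e * cot (2 * complex_of_real pi * of_nat K * w) - 2 * \<i> * Qf K A w"
      using 3 by (simp add: Nf_def e_def)
    hence "norm (Nf K A w) \<le> norm e * norm (cot (2 * complex_of_real pi * of_nat K * w)) + 2 * norm (Qf K A w)"
      using norm_triangle_ineq4[of "e * cot (2 * complex_of_real pi * of_nat K * w)" "2 * \<i> * Qf K A w"]
      by (simp add: norm_mult)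
    also have "\<dots> \<le> 1 * 3 + 2 * real (card (Mset K A))"
      using ne1 cb nQ by (intro add_mono mult_mono) auto
    finally show ?thesis by simp
  qed
qed

lemma Tf_upper:
  assumes "K > 0" "p \<ge> 1" "Im w \<ge> 1"
  shows "norm (Tf K p A w) \<le> (4 + 2 * real (card (Mset K A))) * 4 ^ p * exp (- 2 * pi * Im w)"
proof -
  have "norm (Tf K p A w) \<le> norm (Nf K A w) * 4 ^ p * exp (- 2 * pi * Im w)"
    unfolding Tf_eq_div by (rule div_Sf_bound[OF assms(3,2)])
  also have "\<dots> \<le> (4 + 2 * real (card (Mset K A))) * 4 ^ p * exp (- 2 * pi * Im w)"
    using Nf_bound[OF assms(1,3)] by (intro mult_right_mono) auto
  finally show ?thesis .
qed

lemma Tf_lower: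
  assumes "K > 0" "p \<ge> 1" "Im w \<le> -1"
  shows "norm (Tf K p A w) \<le> (4 + 2 * real (card (Mset K A))) * 4 ^ p * exp (2 * pi * Im w)"
proof -
  have "Tf K p A w = Tf K p A (- (- w))" by simp
  also have "\<dots> = - Tf K p (- A) (- w) / (-1) ^ p" by (rule Tf_uminus)
  finally have "norm (Tf K p A w) = norm (Tf K p (- A) (- w))" by (simp add: norm_divide norm_power)
  also have "\<dots> \<le> (4 + 2 * real (card (Mset K (- A)))) * 4 ^ p * exp (- 2 * pi * Im (- w))"
    using assms by (intro Tf_upper) auto
  finally show ?thesis by simp
qed

definition ZK :: "nat \<Rightarrow> complex set" where
  "ZK K = {w. sin (2 * complex_of_real pi * of_nat K * w) \<noteq> 0}"

lemma ZK_Sf: "w \<in> ZK K \<Longrightarrow> Sf p w \<noteq> 0"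
  unfolding ZK_def Sf_def using sin_2pi_eq_0_imp[of w K] by auto

lemma holo_Ef_Sf: "(\<lambda>w. Ef K A m w / Sf p w) holomorphic_on ZK K"
  unfolding Ef_def Sf_def using ZK_Sf[unfolded Sf_def] by (intro holomorphic_intros) auto

lemma holo_R: "(\<lambda>w. (-2 * \<i>) * of_int (sgn A) * Qf K A w / Sf p w) holomorphic_on ZK K"
  unfolding Qf_def Ef_def Sf_def using ZK_Sf[unfolded Sf_def] by (intro holomorphic_intros) auto

lemma holo_Fa: "Fa K p A holomorphic_on ZK K"
proof -
  have "Fa K p A = (\<lambda>w. exp (- (2 * complex_of_real pi * \<i> * of_int A * w)) *
      (cos (2 * complex_of_real pi * of_nat K * w) / sin (2 * complex_of_real pi * of_nat K * w)) / Sf p w)"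
    (is "_ = ?g") by (simp add: Fa_def cot_def fun_eq_iff)
  moreover have "?g holomorphic_on ZK K"
    using ZK_Sf[unfolded Sf_def] unfolding Sf_def by (intro holomorphic_intros) (auto simp: ZK_def)
  ultimately show ?thesis by simp
qed

lemma holo_Tf: "Tf K p A holomorphic_on ZK K"
proof -
  have "Tf K p A = (\<lambda>w. Fa K p A w - (-2 * \<i>) * of_int (sgn A) * Qf K A w / Sf p w)"
    (is "_ = ?g") by (simp add: Tf_def fun_eq_iff)
  moreover have "?g holomorphic_on ZK K"
    using holo_Fa holo_R by (rule holomorphic_on_diff)
  ultimately show ?thesis by simp
qed

lemma ZK_iff: "K > 0 \<Longrightarrow> w \<notin> ZK K \<longleftrightarrow> (\<exists>k::int. w = of_int k / (2 * of_nat K))"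
  unfolding ZK_def using sin_2piK_eq_0[of K w] by auto

lemma ball_punct_ZK:
  assumes "K > 0"
  shows "ball (of_int k / (2 * of_nat K)) (1 / (2 * real K)) - {of_int k / (2 * of_nat K)} \<subseteq> ZK K"
proof
  fix w :: complex assume w: "w \<in> ball (of_int k / (2 * of_nat K)) (1 / (2 * real K)) - {of_int k / (2 * of_nat K)}"
  show "w \<in> ZK K"
  proof (rule ccontr)
    assume "w \<notin> ZK K"
    then obtain k' :: int where k': "w = of_int k' / (2 * of_nat K)" using ZK_iff[OF assms] by auto
    have "k' \<noteq> k" using w k' by auto
    hence "1 \<le> \<bar>real_of_int k' - real_of_int k\<bar>" by linarith
    have "dist (of_int k / (2 * of_nat K)) w = \<bar>real_of_int k' - real_of_int k\<bar> / (2 * real K)"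
    proof -
      have "of_int k / (2 * of_nat K) - w = complex_of_real ((real_of_int k - real_of_int k') / (2 * real K))"
        by (simp add: k' diff_divide_distrib)
      thus ?thesis by (simp add: dist_norm abs_minus_commute del: of_real_divide of_real_diff)
    qed
    also have "\<dots> \<ge> 1 / (2 * real K)"
      using \<open>1 \<le> _\<close> assms by (intro divide_right_mono) auto
    finally show False using w by simp
  qed
qed

lemma ball_Sf_nz:
  assumes "K > 0" "1 \<le> \<beta>" "\<beta> < K"
  shows "\<forall>w\<in>ball (of_nat \<beta> / (2 * of_nat K)) (1 / (2 * real K)). Sf p w \<noteq> 0"
proof
  fix w :: complex assume w: "w \<in> ball (of_nat \<beta> / (2 * of_nat K)) (1 / (2 * real K))"
  show "Sf p w \<noteq> 0"
  proof
    assume "Sf p w = 0"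
    hence "sin (2 * complex_of_real pi * w) = 0" by (simp add: Sf_def)
    then obtain j :: int where j: "2 * complex_of_real pi * w = of_real (of_int j * pi)"
      by (auto simp: sin_eq_0)
    hence wj: "w = of_int (j * int K) / (2 * of_nat K)" using assms by (simp add: field_simps)
    have "w \<noteq> of_nat \<beta> / (2 * of_nat K)"
    proof
      assume "w = of_nat \<beta> / (2 * of_nat K)"
      hence "complex_of_int (j * int K) = of_nat \<beta>" using wj assms by (simp add: field_simps)
      hence "j * int K = int \<beta>" by (metis of_int_eq_iff of_int_of_nat_eq)
      moreover have "j \<le> 0 \<or> j \<ge> 1" by linarith
      ultimately show False using assms
        by (auto dest: mult_right_mono[of 1 j "int K"] mult_right_mono[of j 0 "int K"])
    qed
    hence "w \<in> ball (of_int (int \<beta>) / (2 * of_nat K)) (1 / (2 * real K)) - {of_int (int \<beta>) / (2 * of_nat K)}"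
      using w by simp
    hence "w \<in> ZK K" using ball_punct_ZK[OF assms(1)] by blast
    moreover have "w \<notin> ZK K" using ZK_iff[OF assms(1)] wj by blast
    ultimately show False by blast
  qed
qed

lemma residue_sum':
  assumes "open s" "z \<in> s" "finite I" "\<And>i. i \<in> I \<Longrightarrow> f i holomorphic_on s - {z}"
  shows "residue (\<lambda>w. \<Sum>i\<in>I. f i w) z = (\<Sum>i\<in>I. residue (f i) z)"
  using assms(3,4)
proof (induction I rule: finite_induct)
  case empty
  then show ?case by (simp add: residue_const)
next
  case (insert x I)
  have "residue (\<lambda>w. \<Sum>i\<in>insert x I. f i w) z = residue (\<lambda>w. f x w + (\<Sum>i\<in>I. f i w)) z"
    using insert by simp
  also have "\<dots> = residue (f x) z + residue (\<lambda>w. \<Sum>i\<in>I. f i w) z"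
    using insert by (intro residue_add[OF assms(1,2)] holomorphic_on_sum) auto
  also have "\<dots> = residue (f x) z + (\<Sum>i\<in>I. residue (f i) z)"
    using insert by simp
  finally show ?case using insert by simp
qed

lemma res_Tf_beta:
  assumes K: "K > 0" and b: "1 \<le> \<beta>" "\<beta> < K"
  defines "z0 \<equiv> of_nat \<beta> / (2 * of_nat K) :: complex"
  shows "residue (Tf K p A) z0 = exp (- (2 * complex_of_real pi * \<i> * of_int A * z0)) /
            (2 * complex_of_real pi * of_nat K * Sf p z0)"
proof -
  define B where "B = ball z0 (1 / (2 * real K))"
  have Bo: "open B" and Bc: "connected B" and z0B: "z0 \<in> B" using K by (auto simp: B_def)
  have SnzB: "\<forall>w\<in>B. Sf p w \<noteq> 0" using ball_Sf_nz[OF assms(1-3)] by (simp add: B_def z0_def)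
  have punct: "B - {z0} \<subseteq> ZK K"
    using ball_punct_ZK[OF K, of "int \<beta>"] by (simp add: B_def z0_def)
  define c where "c = 2 * complex_of_real pi * of_nat K"
  define f where "f = (\<lambda>w. exp (- (2 * complex_of_real pi * \<i> * of_int A * w)) * cos (c * w) / Sf p w)"
  define g where "g = (\<lambda>w. sin (c * w))"
  have fh: "f holomorphic_on B" unfolding f_def using SnzB[unfolded Sf_def] unfolding Sf_def
    by (intro holomorphic_intros) auto
  have gh: "g holomorphic_on B" unfolding g_def by (intro holomorphic_intros)
  have gd: "(g has_field_derivative (cos (c * z0) * c)) (at z0)"
    unfolding g_def by (auto intro!: derivative_eq_intros)
  have cz0: "c * z0 = of_real (of_int (int \<beta>) * pi)" using K by (simp add: c_def z0_def)
  have g0: "g z0 = 0" unfolding g_def by (subst sin_eq_0) (use cz0 in blast)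
  have cos_nz: "cos (c * z0) \<noteq> 0"
  proof
    assume "cos (c * z0) = 0"
    moreover have "sin (c * z0) ^ 2 + cos (c * z0) ^ 2 = 1" by (rule sin_cos_squared_add)
    ultimately show False using g0 by (simp add: g_def)
  qed
  have c_nz: "c \<noteq> 0" using K by (simp add: c_def)
  have f0: "f z0 \<noteq> 0" using cos_nz SnzB z0B by (simp add: f_def)
  have resFa: "residue (Fa K p A) z0 = f z0 / (cos (c * z0) * c)"
  proof -
    have "Fa K p A = (\<lambda>w. f w / g w)"
      by (simp add: fun_eq_iff Fa_def f_def g_def c_def cot_def)
    thus ?thesis using residue_simple_pole_deriv[OF fh gh Bo Bc z0B gd f0 g0] cos_nz c_nz by simp
  qed
  define R where "R = (\<lambda>w. (-2 * \<i>) * of_int (sgn A) * Qf K A w / Sf p w)"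
  have Rh: "R holomorphic_on B" unfolding R_def Qf_def Ef_def Sf_def using SnzB[unfolded Sf_def]
    by (intro holomorphic_intros) auto
  have "residue (Tf K p A) z0 = residue (\<lambda>w. Fa K p A w - R w) z0"
    by (simp only: Tf_def[abs_def] R_def)
  also have "\<dots> = residue (Fa K p A) z0 - residue R z0"
    by (rule residue_diff[OF Bo z0B]) (use holo_Fa punct Rh in \<open>auto intro: holomorphic_on_subset\<close>)
  also have "residue R z0 = 0" by (rule residue_holo[OF Bo z0B Rh])
  finally have "residue (Tf K p A) z0 = f z0 / (cos (c * z0) * c)" using resFa by simp
  also have "\<dots> = exp (- (2 * complex_of_real pi * \<i> * of_int A * z0)) / (c * Sf p z0)"
    using cos_nz c_nz by (simp add: f_def field_simps)
  finally show ?thesis by (simp add: c_def)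
qed

lemma res_Tf_0:
  assumes K: "K > 0"
  shows "residue (Tf K p A) 0 = residue (Fa K p A) 0
     - (-2 * \<i>) * of_int (sgn A) * (\<Sum>m\<in>Mset K A. 1 / sigma_m m * residue (\<lambda>w. Ef K A m w / Sf p w) 0)"
proof -
  define B where "B = ball (0::complex) (1 / (2 * real K))"
  have Bo: "open B" and z0B: "0 \<in> B" using K by (auto simp: B_def)
  have punct: "B - {0} \<subseteq> ZK K"
    using ball_punct_ZK[OF K, of 0] by (simp add: B_def)
  define R where "R = (\<lambda>w. (-2 * \<i>) * of_int (sgn A) * Qf K A w / Sf p w)"
  have Rh: "R holomorphic_on B - {0}" using holo_R punct unfolding R_def by (rule holomorphic_on_subset)
  have Eh: "(\<lambda>w. Ef K A m w / Sf p w) holomorphic_on B - {0}" for m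
    using holo_Ef_Sf punct by (rule holomorphic_on_subset)
  have Eh': "(\<lambda>w. 1 / sigma_m m * (Ef K A m w / Sf p w)) holomorphic_on B - {0}" for m
    by (rule holomorphic_on_mult[OF holomorphic_on_const Eh])
  have Sh: "(\<lambda>w. \<Sum>m\<in>Mset K A. 1 / sigma_m m * (Ef K A m w / Sf p w)) holomorphic_on B - {0}"
    by (rule holomorphic_on_sum) (rule Eh')
  have "residue (Tf K p A) 0 = residue (\<lambda>w. Fa K p A w - R w) 0"
    by (simp only: Tf_def[abs_def] R_def)
  also have "\<dots> = residue (Fa K p A) 0 - residue R 0"
    by (rule residue_diff[OF Bo z0B]) (use holo_Fa punct Rh in \<open>auto intro: holomorphic_on_subset\<close>)
  also have "R = (\<lambda>w. ((-2 * \<i>) * of_int (sgn A)) * (\<Sum>m\<in>Mset K A. 1 / sigma_m m * (Ef K A m w / Sf p w)))"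
    by (rule ext) (simp only: R_def Qf_def sum_divide_distrib times_divide_eq_right[symmetric])
  also have "residue \<dots> 0 = ((-2 * \<i>) * of_int (sgn A)) *
      residue (\<lambda>w. \<Sum>m\<in>Mset K A. 1 / sigma_m m * (Ef K A m w / Sf p w)) 0"
    by (rule residue_lmul[OF Bo z0B Sh])
  also have "residue (\<lambda>w. \<Sum>m\<in>Mset K A. 1 / sigma_m m * (Ef K A m w / Sf p w)) 0 =
      (\<Sum>m\<in>Mset K A. residue (\<lambda>w. 1 / sigma_m m * (Ef K A m w / Sf p w)) 0)"
    by (rule residue_sum'[OF Bo z0B finite_Mset Eh'])
  also have "\<dots> = (\<Sum>m\<in>Mset K A. 1 / sigma_m m * residue (\<lambda>w. Ef K A m w / Sf p w) 0)"
    by (intro sum.cong refl residue_lmul[OF Bo z0B] Eh)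
  finally show ?thesis by (simp add: mult_ac)
qed

lemma bound_exp_zero:
  fixes x :: complex
  assumes "\<And>Y. Y \<ge> 1 \<Longrightarrow> norm x \<le> C * exp (- 2 * pi * Y)"
  shows "x = 0"
proof -
  have lim: "((\<lambda>Y. C * exp (- 2 * pi * Y)) \<longlongrightarrow> 0) at_top" by real_asymp
  have ev: "eventually (\<lambda>Y. norm x \<le> C * exp (- 2 * pi * Y)) at_top"
    using eventually_ge_at_top[of "1::real"] by eventually_elim (rule assms)
  have "norm x \<le> 0" by (rule tendsto_le[OF trivial_limit_at_top_linorder lim tendsto_const ev])
  thus ?thesis by simp
qed

lemma res_sum_zero:
  assumes K: "K > 0" and p: "p \<ge> 1" and par: "even (A + int p)"
  shows "(\<Sum>k<K. residue (Tf K p A) (of_nat k / (2 * of_nat K))) = 0"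
proof -
  define a :: real where "a = - 1 / (4 * real K)"
  define b :: real where "b = 1/2 - 1 / (4 * real K)"
  have ab: "b = a + 1/2" by (simp add: a_def b_def)
  have Kr: "real K > 0" using K by simp
  define S where "S = {w. Re w > - 3 / (8 * real K)} \<inter> {w. Re w < 1/2 - 1 / (8 * real K)}"
  define pt where "pt = (\<lambda>k::nat. of_nat k / (2 * of_nat K) :: complex)"
  define pts where "pts = pt ` {..<K}"
  define C where "C = (4 + 2 * real (card (Mset K A))) * 4 ^ p"
  have C0: "C \<ge> 0" by (simp add: C_def)
  have So: "open S" unfolding S_def by (intro open_Int open_halfspace_Re_gt open_halfspace_Re_lt)
  have Sc: "connected S" unfolding S_def
    by (intro convex_connected convex_Int convex_halfspace_Re_gt convex_halfspace_Re_lt)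
  have fin: "finite pts" by (simp add: pts_def)
  have Re_pt: "Re (pt k) = real k / (2 * real K)" for k by (simp add: pt_def)
  have Im_pt: "Im (pt k) = 0" for k by (simp add: pt_def)
  have Re_int: "of_int k / (2 * of_nat K) = complex_of_real (of_int k / (2 * real K))" for k :: int
    by simp
  have SZ: "S - pts \<subseteq> ZK K"
  proof
    fix w assume w: "w \<in> S - pts"
    show "w \<in> ZK K"
    proof (rule ccontr)
      assume "w \<notin> ZK K"
      then obtain k :: int where k: "w = of_int k / (2 * of_nat K)" using ZK_iff[OF K] by auto
      have Rew: "Re w = of_int k / (2 * real K)" by (simp add: k Re_int del: of_real_divide)
      have "- 3 / (8 * real K) < of_int k / (2 * real K)" using w Rew by (simp add: S_def)
      hence "- 3 < 4 * real_of_int k" using Kr by (simp add: field_simps)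
      hence k0: "k \<ge> 0" by linarith
      have "of_int k / (2 * real K) < 1/2 - 1 / (8 * real K)" using w Rew by (simp add: S_def)
      hence "4 * real_of_int k < 4 * real K - 1" using Kr by (simp add: field_simps)
      hence kK: "k < int K" by linarith
      have "w = pt (nat k)" using k k0 by (simp add: pt_def)
      moreover have "nat k < K" using kK k0 by linarith
      ultimately have "w \<in> pts" by (simp add: pts_def)
      thus False using w by simp
    qed
  qed
  have holo: "Tf K p A holomorphic_on S - pts" using holo_Tf SZ by (rule holomorphic_on_subset)
  have Sopen': "open (S - pts)" using So fin by (intro open_Diff finite_imp_closed)
  have periodic: "(\<lambda>x. Tf K p A (x + 1/2)) = Tf K p A"
    using Tf_periodic[OF K par] by (simp add: fun_eq_iff)
  have main: "norm (\<Sum>q\<in>pts. residue (Tf K p A) q) \<le> C * exp (- 2 * pi * Y)" if Y: "Y \<ge> 1" for Y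
  proof -
    define a1 where "a1 = Complex a (- Y)"
    define a2 where "a2 = Complex b (- Y)"
    define a3 where "a3 = Complex b Y"
    define a4 where "a4 = Complex a Y"
    define l1 where "l1 = linepath a1 a2"
    define l2 where "l2 = linepath a2 a3"
    define l3 where "l3 = linepath a3 a4"
    define l4 where "l4 = linepath a4 a1"
    have g: "rectpath a1 a3 = l1 +++ l2 +++ l3 +++ l4"
      by (simp add: rectpath_def Let_def l1_def l2_def l3_def l4_def a1_def a2_def a3_def a4_def)
    have ab': "a < b" using ab by simp
    have le1: "Re a1 \<le> Re a3" "Im a1 \<le> Im a3" using ab' Y by (auto simp: a1_def a3_def)
    have aS: "- 3 / (8 * real K) < a" "b < 1/2 - 1 / (8 * real K)"
      using Kr by (simp_all add: a_def b_def field_simps)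
    have cboxS: "cbox a1 a3 \<subseteq> S"
      using aS by (auto simp: in_cbox_complex_iff S_def a1_def a3_def)
    have pimg: "path_image (rectpath a1 a3) \<subseteq> S - pts"
    proof
      fix z assume z: "z \<in> path_image (rectpath a1 a3)"
      hence zc: "z \<in> cbox a1 a3" using path_image_rectpath_subset_cbox[OF le1] by blast
      have "z \<notin> pts"
      proof
        assume "z \<in> pts"
        then obtain k where k: "k < K" "z = pt k" by (auto simp: pts_def)
        from z le1 have "(Re z = a \<or> Re z = b) \<or> (Im z = - Y \<or> Im z = Y)"
          by (auto simp: path_image_rectpath a1_def a3_def)
        moreover have "Im z \<noteq> - Y" "Im z \<noteq> Y" using k Y Im_pt by auto
        moreover have "Re z \<noteq> a"
        proof
          assume "Re z = a"
          hence "real k / (2 * real K) = - 1 / (4 * real K)" using k Re_pt by (simp add: a_def)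
          hence "2 * real k = - 1" using Kr by (simp add: field_simps)
          thus False by linarith
        qed
        moreover have "Re z \<noteq> b"
        proof
          assume "Re z = b"
          hence "real k / (2 * real K) = 1/2 - 1 / (4 * real K)" using k Re_pt by (simp add: b_def)
          hence "2 * real k = 2 * real K - 1" using Kr by (simp add: field_simps)
          hence "2 * k = 2 * K - 1" by linarith
          thus False using K by presburger
        qed
        ultimately show False by blast
      qed
      thus "z \<in> S - pts" using zc cboxS by blast
    qed
    have wind_out: "\<forall>z. z \<notin> S \<longrightarrow> winding_number (rectpath a1 a3) z = 0"
      using cboxS by (auto intro!: winding_number_rectpath_outside[OF le1])
    have wind_in: "winding_number (rectpath a1 a3) q = 1" if "q \<in> pts" for q
    proof (rule winding_number_rectpath)
      from that obtain k where k: "k < K" "q = pt k" by (auto simp: pts_def)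
      have "a < real k / (2 * real K)" using Kr by (simp add: a_def field_simps)
      moreover have "real k / (2 * real K) < b"
      proof -
        have "2 * real k < 2 * real K - 1" using k by linarith
        thus ?thesis using Kr by (simp add: b_def field_simps)
      qed
      ultimately show "q \<in> box a1 a3" using k Y
        by (simp add: in_box_complex_iff a1_def a3_def Re_pt Im_pt)
    qed
    have RT: "contour_integral (rectpath a1 a3) (Tf K p A) =
        2 * pi * \<i> * (\<Sum>q\<in>pts. winding_number (rectpath a1 a3) q * residue (Tf K p A) q)"
      by (rule Residue_theorem[OF So Sc fin holo]) (use pimg wind_out in auto)
    also have "(\<Sum>q\<in>pts. winding_number (rectpath a1 a3) q * residue (Tf K p A) q) =
               (\<Sum>q\<in>pts. residue (Tf K p A) q)"
      using wind_in by (intro sum.cong) auto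
    finally have RT': "contour_integral (rectpath a1 a3) (Tf K p A) = 2 * pi * \<i> * (\<Sum>q\<in>pts. residue (Tf K p A) q)" .
    have se: "pathfinish l1 = pathstart l2" "pathfinish l2 = pathstart l3" "pathfinish l3 = pathstart l4"
      by (simp_all add: l1_def l2_def l3_def l4_def)
    have pimg_parts: "path_image l1 \<subseteq> S - pts" "path_image l2 \<subseteq> S - pts"
         "path_image l3 \<subseteq> S - pts" "path_image l4 \<subseteq> S - pts"
      using pimg unfolding g by (auto simp: path_image_join se l1_def l2_def l3_def l4_def)
    have vp: "valid_path l1" "valid_path l2" "valid_path l3" "valid_path l4"
      by (simp_all add: l1_def l2_def l3_def l4_def)
    have int: "Tf K p A contour_integrable_on l1" "Tf K p A contour_integrable_on l2"
              "Tf K p A contour_integrable_on l3" "Tf K p A contour_integrable_on l4"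
      using pimg_parts vp by (auto intro!: contour_integrable_holomorphic_simple[OF holo Sopen'])
    have decomp: "contour_integral (rectpath a1 a3) (Tf K p A) =
        contour_integral l1 (Tf K p A) + contour_integral l2 (Tf K p A) +
        contour_integral l3 (Tf K p A) + contour_integral l4 (Tf K p A)"
    proof -
      have se2: "pathfinish l2 = pathstart (l3 +++ l4)" "pathfinish l1 = pathstart (l2 +++ l3 +++ l4)"
        using se by simp_all
      have v34: "valid_path (l3 +++ l4)" using vp se by (intro valid_path_join) auto
      have v234: "valid_path (l2 +++ l3 +++ l4)" using vp v34 se2 se by (intro valid_path_join) auto
      have i34: "Tf K p A contour_integrable_on (l3 +++ l4)" using int vp by (intro contour_integrable_joinI) auto
      have i234: "Tf K p A contour_integrable_on (l2 +++ l3 +++ l4)"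
        using int vp v34 i34 by (intro contour_integrable_joinI) auto
      show ?thesis unfolding g
        using int vp v34 v234 i34 i234 by (simp add: add_ac)
    qed
    have a2e: "a2 = a1 + 1/2" and a3e: "a3 = a4 + 1/2"
      by (simp_all add: complex_eq_iff a1_def a2_def a3_def a4_def ab)
    have "contour_integral l2 (Tf K p A) = contour_integral ((+) (1/2) \<circ> linepath a1 a4) (Tf K p A)"
      by (simp add: l2_def linepath_translate a2e a3e add_ac)
    also have "\<dots> = contour_integral (linepath a1 a4) (\<lambda>x. Tf K p A (x + 1/2))"
      by (rule contour_integral_translate)
    also have "\<dots> = contour_integral (linepath a1 a4) (Tf K p A)" by (simp only: periodic)
    also have "\<dots> = contour_integral (reversepath l4) (Tf K p A)" by (simp add: l4_def)
    also have "\<dots> = - contour_integral l4 (Tf K p A)"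
      by (rule contour_integral_reversepath) (simp add: l4_def)
    finally have I24: "contour_integral l2 (Tf K p A) + contour_integral l4 (Tf K p A) = 0" by simp
    have B1: "norm (contour_integral l1 (Tf K p A)) \<le> C * exp (- 2 * pi * Y) * norm (a2 - a1)"
      unfolding l1_def
    proof (rule contour_integral_bound_linepath)
      show "Tf K p A contour_integrable_on linepath a1 a2" using int(1) by (simp add: l1_def)
      show "0 \<le> C * exp (- 2 * pi * Y)" using C0 by simp
      fix x assume "x \<in> closed_segment a1 a2"
      hence "Im x = - Y" by (subst (asm) closed_segment_same_Im) (auto simp: a1_def a2_def)
      thus "norm (Tf K p A x) \<le> C * exp (- 2 * pi * Y)"
        using Tf_lower[OF K p, of x A] Y by (simp add: C_def)
    qed
    have B3: "norm (contour_integral l3 (Tf K p A)) \<le> C * exp (- 2 * pi * Y) * norm (a4 - a3)"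
      unfolding l3_def
    proof (rule contour_integral_bound_linepath)
      show "Tf K p A contour_integrable_on linepath a3 a4" using int(3) by (simp add: l3_def)
      show "0 \<le> C * exp (- 2 * pi * Y)" using C0 by simp
      fix x assume "x \<in> closed_segment a3 a4"
      hence "Im x = Y" by (subst (asm) closed_segment_same_Im) (auto simp: a3_def a4_def)
      thus "norm (Tf K p A x) \<le> C * exp (- 2 * pi * Y)"
        using Tf_upper[OF K p, of x A] Y by (simp add: C_def)
    qed
    have n21: "norm (a2 - a1) = 1/2" and n43: "norm (a4 - a3) = 1/2"
      by (simp_all add: a1_def a2_def a3_def a4_def ab cmod_def)
    have "2 * pi * \<i> * (\<Sum>q\<in>pts. residue (Tf K p A) q) =
          contour_integral l1 (Tf K p A) + contour_integral l3 (Tf K p A)"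
    proof -
      have "2 * pi * \<i> * (\<Sum>q\<in>pts. residue (Tf K p A) q) =
        contour_integral l1 (Tf K p A) + contour_integral l2 (Tf K p A) +
        contour_integral l3 (Tf K p A) + contour_integral l4 (Tf K p A)" using RT' decomp by simp
      also have "\<dots> = contour_integral l1 (Tf K p A) + contour_integral l3 (Tf K p A) +
          (contour_integral l2 (Tf K p A) + contour_integral l4 (Tf K p A))" by (simp only: add_ac)
      finally show ?thesis using I24 by simp
    qed
    hence "norm (2 * pi * \<i> * (\<Sum>q\<in>pts. residue (Tf K p A) q)) \<le>
           C * exp (- 2 * pi * Y) * (1/2) + C * exp (- 2 * pi * Y) * (1/2)"
      using B1 B3 n21 n43 norm_triangle_ineq[of "contour_integral l1 (Tf K p A)" "contour_integral l3 (Tf K p A)"]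
      by simp
    hence "2 * pi * norm (\<Sum>q\<in>pts. residue (Tf K p A) q) \<le> C * exp (- 2 * pi * Y)"
      by (simp add: norm_mult)
    moreover have "norm (\<Sum>q\<in>pts. residue (Tf K p A) q) \<le> 2 * pi * norm (\<Sum>q\<in>pts. residue (Tf K p A) q)"
    proof -
      have "1 * norm (\<Sum>q\<in>pts. residue (Tf K p A) q) \<le> (2 * pi) * norm (\<Sum>q\<in>pts. residue (Tf K p A) q)"
        using pi_gt3 by (intro mult_right_mono) auto
      thus ?thesis by simp
    qed
    ultimately show ?thesis by linarith
  qed
  have "(\<Sum>q\<in>pts. residue (Tf K p A) q) = 0" by (rule bound_exp_zero[OF main])
  moreover have "(\<Sum>q\<in>pts. residue (Tf K p A) q) = (\<Sum>k<K. residue (Tf K p A) (pt k))"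
    unfolding pts_def using K by (subst sum.reindex) (auto simp: inj_on_def pt_def)
  ultimately show ?thesis by (simp add: pt_def)
qed

lemma core_identity:
  assumes K: "K > 0" and p: "p \<ge> 1" and par: "even (A + int p)"
  shows "residue (Fa K p A) 0
     - (-2 * \<i>) * of_int (sgn A) * (\<Sum>m\<in>Mset K A. 1 / sigma_m m * residue (\<lambda>w. Ef K A m w / Sf p w) 0)
     + (\<Sum>\<beta>\<in>{1..<K}. exp (- (2 * complex_of_real pi * \<i> * of_int A * (of_nat \<beta> / (2 * of_nat K)))) /
            (2 * complex_of_real pi * of_nat K * Sf p (of_nat \<beta> / (2 * of_nat K)))) = 0"
proof -
  have "{..<K} = insert 0 {1..<K}" using K by auto
  hence "(\<Sum>k<K. residue (Tf K p A) (of_nat k / (2 * of_nat K))) =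
         residue (Tf K p A) 0 + (\<Sum>k\<in>{1..<K}. residue (Tf K p A) (of_nat k / (2 * of_nat K)))"
    by simp
  also have "(\<Sum>k\<in>{1..<K}. residue (Tf K p A) (of_nat k / (2 * of_nat K))) =
     (\<Sum>\<beta>\<in>{1..<K}. exp (- (2 * complex_of_real pi * \<i> * of_int A * (of_nat \<beta> / (2 * of_nat K)))) /
            (2 * complex_of_real pi * of_nat K * Sf p (of_nat \<beta> / (2 * of_nat K))))"
    by (intro sum.cong refl res_Tf_beta[OF K]) auto
  finally show ?thesis using res_sum_zero[OF K p par] res_Tf_0[OF K, of p A] by simp
qed

lemma sin_as_sum: "sin (y::complex) = \<i> / 2 * (\<Sum>e\<in>{-1, 1::int}. of_int e * exp (- (\<i> * (of_int e * y))))"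
  by (simp add: sin_exp_eq' field_simps)

lemma prod_sin_expand:
  fixes x :: "nat \<Rightarrow> complex"
  shows "(\<Prod>j<n. sin (x j)) = (\<i> / 2) ^ n *
     (\<Sum>\<mu>\<in>({0..<n} \<rightarrow>\<^sub>E {-1, 1::int}). of_int (\<Prod>j<n. \<mu> j) * exp (- (\<i> * (\<Sum>j<n. of_int (\<mu> j) * x j))))"
proof -
  have "(\<Prod>j<n. sin (x j)) = (\<Prod>j<n. \<i> / 2 * (\<Sum>e\<in>{-1, 1::int}. of_int e * exp (- (\<i> * (of_int e * x j)))))"
    by (simp only: sin_as_sum)
  also have "\<dots> = (\<i> / 2) ^ n * (\<Prod>j<n. \<Sum>e\<in>{-1, 1::int}. of_int e * exp (- (\<i> * (of_int e * x j))))"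
    by (simp only: prod.distrib prod_constant card_lessThan)
  also have "(\<Prod>j<n. \<Sum>e\<in>{-1, 1::int}. of_int e * exp (- (\<i> * (of_int e * x j)))) =
     (\<Sum>\<mu>\<in>({..<n} \<rightarrow>\<^sub>E {-1, 1::int}). \<Prod>j<n. of_int (\<mu> j) * exp (- (\<i> * (of_int (\<mu> j) * x j))))"
    by (rule prod_sum_PiE) auto
  also have "\<dots> = (\<Sum>\<mu>\<in>({0..<n} \<rightarrow>\<^sub>E {-1, 1::int}). of_int (\<Prod>j<n. \<mu> j) * exp (- (\<i> * (\<Sum>j<n. of_int (\<mu> j) * x j))))"
  proof -
    have "(\<Prod>j<n. of_int (\<mu> j) * exp (- (\<i> * (of_int (\<mu> j) * x j)))) =
          of_int (\<Prod>j<n. \<mu> j) * exp (- (\<i> * (\<Sum>j<n. of_int (\<mu> j) * x j)))" for \<mu> :: "nat \<Rightarrow> int"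
      by (simp add: prod.distrib exp_sum sum_distrib_left sum_negf[symmetric] flip: exp_sum)
    thus ?thesis by (simp add: atLeast0LessThan)
  qed
  finally show ?thesis .
qed

lemma prod_sin_alpha:
  fixes \<alpha> :: "nat \<Rightarrow> nat" and \<phi> :: complex
  shows "(\<Prod>j<n. sin (2 * complex_of_real pi * of_nat (\<alpha> j) * \<phi>)) = (\<i> / 2) ^ n *
     (\<Sum>\<mu>\<in>({0..<n} \<rightarrow>\<^sub>E {-1, 1::int}). of_int (\<Prod>j<n. \<mu> j) *
        exp (- (2 * complex_of_real pi * \<i> * of_int (\<Sum>j<n. \<mu> j * int (\<alpha> j)) * \<phi>)))"
proof -
  have eq: "(\<i> * (\<Sum>j<n. of_int (\<mu> j) * (2 * complex_of_real pi * of_nat (\<alpha> j) * \<phi>))) =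
        2 * complex_of_real pi * \<i> * of_int (\<Sum>j<n. \<mu> j * int (\<alpha> j)) * \<phi>" for \<mu> :: "nat \<Rightarrow> int"
    by (simp add: sum_distrib_left sum_distrib_right mult_ac)
  have "(\<Prod>j<n. sin (2 * complex_of_real pi * of_nat (\<alpha> j) * \<phi>)) = (\<i> / 2) ^ n *
     (\<Sum>\<mu>\<in>({0..<n} \<rightarrow>\<^sub>E {-1, 1::int}). of_int (\<Prod>j<n. \<mu> j) *
        exp (- (\<i> * (\<Sum>j<n. of_int (\<mu> j) * (2 * complex_of_real pi * of_nat (\<alpha> j) * \<phi>)))))"
    by (rule prod_sin_expand)
  also have "\<dots> = (\<i> / 2) ^ n *
     (\<Sum>\<mu>\<in>({0..<n} \<rightarrow>\<^sub>E {-1, 1::int}). of_int (\<Prod>j<n. \<mu> j) *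
        exp (- (2 * complex_of_real pi * \<i> * of_int (\<Sum>j<n. \<mu> j * int (\<alpha> j)) * \<phi>)))"
    by (simp only: eq)
  finally show ?thesis .
qed

lemma sin_reflect:
  assumes "\<beta> < K" "K > 0"
  shows "sin (pi * real (K - \<beta>) * real a / real K) = (-1) ^ (a + 1) * sin (pi * real \<beta> * real a / real K)"
proof -
  have "pi * real (K - \<beta>) * real a / real K = real a * pi - pi * real \<beta> * real a / real K"
    using assms by (simp add: of_nat_diff field_simps)
  thus ?thesis by (simp add: sin_diff)
qed

lemma verlinde_odd:
  assumes K: "K \<ge> 2" and odd: "odd (n + (\<Sum>j<n. \<alpha> j))"
  shows "verlinde K g n \<alpha> = 0"
proof -
  define p where "p = n + 2 * g - 2"
  define f where "f = (\<lambda>\<beta>. (\<Prod>j<n. sin (pi * real \<beta> * real (\<alpha> j) / real K)) / sin (pi * real \<beta> / real K) ^ p)"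
  have K0: "K > 0" using K by simp
  have refl: "f (K - \<beta>) = - f \<beta>" if b: "\<beta> \<in> {1..K-1}" for \<beta>
  proof -
    have bK: "\<beta> < K" using b K0 by auto
    have "(\<Prod>j<n. sin (pi * real (K - \<beta>) * real (\<alpha> j) / real K)) =
          (\<Prod>j<n. (-1) ^ (\<alpha> j + 1) * sin (pi * real \<beta> * real (\<alpha> j) / real K))"
      using sin_reflect[OF bK K0] by simp
    also have "\<dots> = (-1) ^ (\<Sum>j<n. \<alpha> j + 1) * (\<Prod>j<n. sin (pi * real \<beta> * real (\<alpha> j) / real K))"
      by (simp only: prod.distrib power_sum)
    also have "(\<Sum>j<n. \<alpha> j + 1) = n + (\<Sum>j<n. \<alpha> j)" by (subst sum.distrib) simp
    finally have num: "(\<Prod>j<n. sin (pi * real (K - \<beta>) * real (\<alpha> j) / real K)) =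
       - (\<Prod>j<n. sin (pi * real \<beta> * real (\<alpha> j) / real K))" using odd by simp
    have "sin (pi * real (K - \<beta>) / real K) = sin (pi * real \<beta> / real K)"
    proof -
      have "pi * real (K - \<beta>) / real K = pi - pi * real \<beta> / real K"
        using bK K0 by (simp add: of_nat_diff field_simps)
      thus ?thesis by (simp add: sin_diff)
    qed
    thus ?thesis using num by (simp add: f_def)
  qed
  have "(\<Sum>\<beta>\<in>{1..K-1}. f \<beta>) = (\<Sum>\<beta>\<in>{1..K-1}. f (K - \<beta>))"
    by (rule sum.reindex_bij_witness[of _ "\<lambda>b. K - b" "\<lambda>b. K - b"]) auto
  also have "\<dots> = - (\<Sum>\<beta>\<in>{1..K-1}. f \<beta>)" using refl by (simp add: sum_negf)
  finally have "(\<Sum>\<beta>\<in>{1..K-1}. f \<beta>) = 0" by simp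
  thus ?thesis by (simp add: verlinde_def f_def p_def)
qed

lemma lin_aux: "(t::int) - int s = u \<Longrightarrow> int q = int n + 2 * int g - 2 \<Longrightarrow>
   t + int q = u + (int n + int s) + 2 * (int g - 1)"
  by (simp add: algebra_simps)

lemma parity_A:
  assumes "\<mu> \<in> ({0..<n} \<rightarrow>\<^sub>E {-1, 1::int})" "even (n + (\<Sum>j<n. \<alpha> j))" "n + 2 * g > 2"
  shows "even ((\<Sum>j<n. \<mu> j * int (\<alpha> j)) + int (n + 2 * g - 2))"
proof -
  have d: "(\<Sum>j<n. \<mu> j * int (\<alpha> j)) - int (\<Sum>j<n. \<alpha> j) = (\<Sum>j<n. (\<mu> j - 1) * int (\<alpha> j))"
    by (simp add: sum_subtractf algebra_simps)
  have e1: "even (\<Sum>j<n. (\<mu> j - 1) * int (\<alpha> j))"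
  proof (rule dvd_sum)
    fix j assume "j \<in> {..<n}"
    hence "\<mu> j \<in> {-1, 1}" using assms(1) by auto
    thus "2 dvd (\<mu> j - 1) * int (\<alpha> j)" by auto
  qed
  have i: "int (n + 2 * g - 2) = int n + 2 * int g - 2" using assms(3) by simp
  have e2: "even (int n + int (\<Sum>j<n. \<alpha> j))" using assms(2) by (metis even_of_nat of_nat_add)
  have eq: "(\<Sum>j<n. \<mu> j * int (\<alpha> j)) + int (n + 2 * g - 2) =
     (\<Sum>j<n. (\<mu> j - 1) * int (\<alpha> j)) + (int n + int (\<Sum>j<n. \<alpha> j)) + 2 * (int g - 1)"
    using lin_aux[OF d i] .
  show ?thesis unfolding eq using e1 e2 by simp
qed

definition Zs :: "nat \<Rightarrow> nat \<Rightarrow> int \<Rightarrow> complex" where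
  "Zs K p A = (\<Sum>\<beta>\<in>{1..<K}. exp (- (2 * complex_of_real pi * \<i> * of_int A * (of_nat \<beta> / (2 * of_nat K)))) /
            (2 * complex_of_real pi * of_nat K * Sf p (of_nat \<beta> / (2 * of_nat K))))"

definition Ys :: "nat \<Rightarrow> nat \<Rightarrow> int \<Rightarrow> complex" where
  "Ys K p A = (\<Sum>m\<in>Mset K A. 1 / sigma_m m * residue (\<lambda>w. Ef K A m w / Sf p w) 0)"

lemma core': "K > 0 \<Longrightarrow> p \<ge> 1 \<Longrightarrow> even (A + int p) \<Longrightarrow>
   residue (Fa K p A) 0 - (-2 * \<i>) * of_int (sgn A) * Ys K p A + Zs K p A = 0"
  unfolding Zs_def Ys_def by (rule core_identity)

lemma sum_rearr:
  fixes c S k :: complex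
  shows "(c * (\<Sum>\<mu>\<in>P. a \<mu> * e \<mu>)) / S * k = c * (\<Sum>\<mu>\<in>P. a \<mu> * (e \<mu> * k / S))"
  by (simp add: sum_distrib_left sum_distrib_right sum_divide_distrib mult_ac)

lemma resF_expand:
  assumes K: "K > 0"
  shows "residue (\<lambda>\<phi>::complex. (\<Prod>j<n. sin (2 * complex_of_real pi * of_nat (\<alpha> j) * \<phi>)) /
              sin (2 * complex_of_real pi * \<phi>) ^ p * cot (2 * complex_of_real pi * of_nat K * \<phi>)) 0
    = (\<i> / 2) ^ n * (\<Sum>\<mu>\<in>({0..<n} \<rightarrow>\<^sub>E {-1, 1::int}). of_int (\<Prod>j<n. \<mu> j) *
         residue (Fa K p (\<Sum>j<n. \<mu> j * int (\<alpha> j))) 0)"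
proof -
  define P where "P = ({0..<n} \<rightarrow>\<^sub>E {-1, 1::int})"
  define AA where "AA = (\<lambda>\<mu>. \<Sum>j<n. \<mu> j * int (\<alpha> j))"
  have finP: "finite P" by (simp add: P_def finite_PiE)
  have funeq: "(\<lambda>\<phi>::complex. (\<Prod>j<n. sin (2 * complex_of_real pi * of_nat (\<alpha> j) * \<phi>)) /
              sin (2 * complex_of_real pi * \<phi>) ^ p * cot (2 * complex_of_real pi * of_nat K * \<phi>)) =
        (\<lambda>\<phi>. (\<i> / 2) ^ n * (\<Sum>\<mu>\<in>P. of_int (\<Prod>j<n. \<mu> j) * Fa K p (AA \<mu>) \<phi>))"
  proof
    fix \<phi> :: complex
    show "(\<Prod>j<n. sin (2 * complex_of_real pi * of_nat (\<alpha> j) * \<phi>)) /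
              sin (2 * complex_of_real pi * \<phi>) ^ p * cot (2 * complex_of_real pi * of_nat K * \<phi>) =
          (\<i> / 2) ^ n * (\<Sum>\<mu>\<in>P. of_int (\<Prod>j<n. \<mu> j) * Fa K p (AA \<mu>) \<phi>)"
      unfolding prod_sin_alpha sum_rearr Fa_def Sf_def P_def AA_def ..
  qed
  define B where "B = ball (0::complex) (1 / (2 * real K))"
  have Bo: "open B" and z0B: "0 \<in> B" using K by (auto simp: B_def)
  have punct: "B - {0} \<subseteq> ZK K"
    using ball_punct_ZK[OF K, of 0] by (simp add: B_def)
  have Fh: "Fa K p A holomorphic_on B - {0}" for A
    using holo_Fa punct by (rule holomorphic_on_subset)
  have Fh': "(\<lambda>\<phi>. of_int (\<Prod>j<n. \<mu> j) * Fa K p (AA \<mu>) \<phi>) holomorphic_on B - {0}" for \<mu>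
    by (rule holomorphic_on_mult[OF holomorphic_on_const Fh])
  have Sh: "(\<lambda>\<phi>. \<Sum>\<mu>\<in>P. of_int (\<Prod>j<n. \<mu> j) * Fa K p (AA \<mu>) \<phi>) holomorphic_on B - {0}"
    by (rule holomorphic_on_sum) (rule Fh')
  have "residue (\<lambda>\<phi>. (\<i> / 2) ^ n * (\<Sum>\<mu>\<in>P. of_int (\<Prod>j<n. \<mu> j) * Fa K p (AA \<mu>) \<phi>)) 0 =
        (\<i> / 2) ^ n * residue (\<lambda>\<phi>. \<Sum>\<mu>\<in>P. of_int (\<Prod>j<n. \<mu> j) * Fa K p (AA \<mu>) \<phi>) 0"
    by (rule residue_lmul[OF Bo z0B Sh])
  also have "residue (\<lambda>\<phi>. \<Sum>\<mu>\<in>P. of_int (\<Prod>j<n. \<mu> j) * Fa K p (AA \<mu>) \<phi>) 0 =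
        (\<Sum>\<mu>\<in>P. residue (\<lambda>\<phi>. of_int (\<Prod>j<n. \<mu> j) * Fa K p (AA \<mu>) \<phi>) 0)"
    by (rule residue_sum'[OF Bo z0B finP Fh'])
  also have "\<dots> = (\<Sum>\<mu>\<in>P. of_int (\<Prod>j<n. \<mu> j) * residue (Fa K p (AA \<mu>)) 0)"
    by (intro sum.cong refl residue_lmul[OF Bo z0B] Fh)
  finally show ?thesis unfolding funeq by (simp add: P_def AA_def)
qed

lemma ofr_lemma: "complex_of_real ((\<Prod>j<n. sin (f j)) / sin y ^ p) =
   (\<Prod>j<n. sin (complex_of_real (f j))) / sin (complex_of_real y) ^ p"
  by (simp add: sin_of_real)

lemma LHS_expand:
  assumes K: "K > 0"
  shows "complex_of_real (\<Sum>\<beta> = 1..K - 1. (\<Prod>j<n. sin (pi * real \<beta> * real (\<alpha> j) / real K)) /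
            sin (pi * real \<beta> / real K) ^ p)
    = (\<i> / 2) ^ n * (\<Sum>\<mu>\<in>({0..<n} \<rightarrow>\<^sub>E {-1, 1::int}). of_int (\<Prod>j<n. \<mu> j) *
         (2 * complex_of_real pi * of_nat K * Zs K p (\<Sum>j<n. \<mu> j * int (\<alpha> j))))"
proof -
  define P where "P = ({0..<n} \<rightarrow>\<^sub>E {-1, 1::int})"
  define AA where "AA = (\<lambda>\<mu>. \<Sum>j<n. \<mu> j * int (\<alpha> j))"
  define z where "z = (\<lambda>\<beta>::nat. of_nat \<beta> / (2 * of_nat K) :: complex)"
  define c where "c = 2 * complex_of_real pi * of_nat K"
  define e where "e = (\<lambda>\<mu> \<beta>. exp (- (2 * complex_of_real pi * \<i> * of_int (AA \<mu>) * z \<beta>)))"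
  have c0: "c \<noteq> 0" using K by (simp add: c_def)
  have setEq: "{1..K - 1} = {1..<K}" using K by auto
  have trm: "complex_of_real ((\<Prod>j<n. sin (pi * real \<beta> * real (\<alpha> j) / real K)) / sin (pi * real \<beta> / real K) ^ p)
     = (\<i> / 2) ^ n * (\<Sum>\<mu>\<in>P. of_int (\<Prod>j<n. \<mu> j) * (e \<mu> \<beta> / Sf p (z \<beta>)))" for \<beta>
  proof -
    have a1: "complex_of_real (pi * real \<beta> * real (\<alpha> j) / real K) = 2 * complex_of_real pi * of_nat (\<alpha> j) * z \<beta>" for j
      using K by (simp add: z_def field_simps)
    have a2: "complex_of_real (pi * real \<beta> / real K) = 2 * complex_of_real pi * z \<beta>"
      using K by (simp add: z_def field_simps)
    have "complex_of_real ((\<Prod>j<n. sin (pi * real \<beta> * real (\<alpha> j) / real K)) / sin (pi * real \<beta> / real K) ^ p)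
       = (\<Prod>j<n. sin (2 * complex_of_real pi * of_nat (\<alpha> j) * z \<beta>)) / Sf p (z \<beta>)"
      unfolding ofr_lemma[of "\<lambda>j. pi * real \<beta> * real (\<alpha> j) / real K"] a1 a2 Sf_def ..
    also have "\<dots> = (\<i> / 2) ^ n * (\<Sum>\<mu>\<in>P. of_int (\<Prod>j<n. \<mu> j) * e \<mu> \<beta>) / Sf p (z \<beta>)"
      by (simp only: prod_sin_alpha P_def e_def AA_def)
    also have "\<dots> = (\<i> / 2) ^ n * (\<Sum>\<mu>\<in>P. of_int (\<Prod>j<n. \<mu> j) * (e \<mu> \<beta> / Sf p (z \<beta>)))"
      by (simp only: times_divide_eq_right[symmetric] sum_divide_distrib)
    finally show ?thesis .
  qed
  have inner: "(\<Sum>\<beta>\<in>{1..<K}. e \<mu> \<beta> / Sf p (z \<beta>)) = c * Zs K p (AA \<mu>)" for \<mu>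
  proof -
    have "c * Zs K p (AA \<mu>) = (\<Sum>\<beta>\<in>{1..<K}. c * (e \<mu> \<beta> / (c * Sf p (z \<beta>))))"
      by (simp add: Zs_def sum_distrib_left e_def z_def c_def)
    also have "\<dots> = (\<Sum>\<beta>\<in>{1..<K}. e \<mu> \<beta> / Sf p (z \<beta>))"
      using c0 by (intro sum.cong refl) simp
    finally show ?thesis by simp
  qed
  have "complex_of_real (\<Sum>\<beta> = 1..K - 1. (\<Prod>j<n. sin (pi * real \<beta> * real (\<alpha> j) / real K)) /
            sin (pi * real \<beta> / real K) ^ p) =
        (\<Sum>\<beta>\<in>{1..<K}. (\<i> / 2) ^ n * (\<Sum>\<mu>\<in>P. of_int (\<Prod>j<n. \<mu> j) * (e \<mu> \<beta> / Sf p (z \<beta>))))"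
    by (simp only: of_real_sum setEq trm)
  also have "\<dots> = (\<i> / 2) ^ n * (\<Sum>\<beta>\<in>{1..<K}. \<Sum>\<mu>\<in>P. of_int (\<Prod>j<n. \<mu> j) * (e \<mu> \<beta> / Sf p (z \<beta>)))"
    by (simp only: sum_distrib_left)
  also have "\<dots> = (\<i> / 2) ^ n * (\<Sum>\<mu>\<in>P. \<Sum>\<beta>\<in>{1..<K}. of_int (\<Prod>j<n. \<mu> j) * (e \<mu> \<beta> / Sf p (z \<beta>)))"
    by (subst sum.swap) (rule refl)
  also have "\<dots> = (\<i> / 2) ^ n * (\<Sum>\<mu>\<in>P. of_int (\<Prod>j<n. \<mu> j) * (\<Sum>\<beta>\<in>{1..<K}. e \<mu> \<beta> / Sf p (z \<beta>)))"
    by (simp only: sum_distrib_left)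
  also have "\<dots> = (\<i> / 2) ^ n * (\<Sum>\<mu>\<in>P. of_int (\<Prod>j<n. \<mu> j) * (c * Zs K p (AA \<mu>)))"
    by (simp only: inner)
  finally show ?thesis by (simp add: P_def AA_def c_def)
qed

theorem proposition5p1p1:
  fixes g n K :: nat and \<alpha> :: "nat \<Rightarrow> nat"
  assumes "n + 2 * g > 2"
    and "K \<ge> 2"
    and "\<forall>j<n. 1 \<le> \<alpha> j \<and> \<alpha> j \<le> K - 1"
  shows "(odd (n + (\<Sum>j<n. \<alpha> j)) \<longrightarrow> verlinde K g n \<alpha> = 0) \<and>
    (even (n + (\<Sum>j<n. \<alpha> j)) \<longrightarrow>
      complex_of_real (verlinde K g n \<alpha>) =
        - 4 * complex_of_real pi * complex_of_real ((real K / 2) ^ g) *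
        ( residue (\<lambda>\<phi>::complex.
              (\<Prod>j<n. sin (2 * complex_of_real pi * of_nat (\<alpha> j) * \<phi>)) /
              sin (2 * complex_of_real pi * \<phi>) ^ (n + 2 * g - 2) *
              cot (2 * complex_of_real pi * of_nat K * \<phi>)) 0
          - (\<i> / 2) ^ (n - 1) *
            (\<Sum>\<mu> \<in> ({0..<n} \<rightarrow>\<^sub>E {-1, 1::int}).
              (let A = (\<Sum>j<n. \<mu> j * int (\<alpha> j)) in
              of_int (\<Prod>j<n. \<mu> j) * of_int (sgn A) *
              (\<Sum>m \<in> {m::int. 0 \<le> m \<and> real_of_int m < real_of_int \<bar>A\<bar> / (2 * real K)}.
                 1 / sigma_m m *
                 residue (\<lambda>\<phi>::complex.
                    exp (2 * complex_of_real pi * \<i> * \<phi> * of_int (sgn A)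
                         * of_int (2 * int K * m - \<bar>A\<bar>)) /
                    sin (2 * complex_of_real pi * \<phi>) ^ (n + 2 * g - 2)) 0)))))"
proof -
  have K0: "K > 0" using assms(2) by simp
  have p1: "n + 2 * g - 2 \<ge> 1" using assms(1) by simp
  show ?thesis
  proof (intro conjI impI)
    assume "odd (n + (\<Sum>j<n. \<alpha> j))"
    thus "verlinde K g n \<alpha> = 0" by (rule verlinde_odd[OF assms(2)])
  next
    assume ev: "even (n + (\<Sum>j<n. \<alpha> j))"
    define P where "P = ({0..<n} \<rightarrow>\<^sub>E {-1, 1::int})"
    define AA where "AA = (\<lambda>\<mu>::nat\<Rightarrow>int. \<Sum>j<n. \<mu> j * int (\<alpha> j))"
    define X where "X = (\<lambda>\<mu>. residue (Fa K (n + 2 * g - 2) (AA \<mu>)) 0)"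
    define Y where "Y = (\<lambda>\<mu>. Ys K (n + 2 * g - 2) (AA \<mu>))"
    define Z where "Z = (\<lambda>\<mu>. Zs K (n + 2 * g - 2) (AA \<mu>))"
    define a where "a = (\<lambda>\<mu>::nat\<Rightarrow>int. (of_int (\<Prod>j<n. \<mu> j) :: complex))"
    define s where "s = (\<lambda>\<mu>. (of_int (sgn (AA \<mu>)) :: complex))"
    define c where "c = (\<i> / 2 :: complex) ^ n"
    define W where "W = c * (\<Sum>\<mu>\<in>P. a \<mu> * Z \<mu>)"
    have core: "X \<mu> - (-2 * \<i>) * s \<mu> * Y \<mu> + Z \<mu> = 0" if "\<mu> \<in> P" for \<mu>
    proof -
      have par: "even (AA \<mu> + int (n + 2 * g - 2))"
        using parity_A[OF that[unfolded P_def] ev assms(1)] by (simp only: AA_def)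
      show ?thesis unfolding X_def Y_def Z_def s_def by (rule core'[OF K0 p1 par])
    qed
    have R1: "residue (\<lambda>\<phi>::complex.
              (\<Prod>j<n. sin (2 * complex_of_real pi * of_nat (\<alpha> j) * \<phi>)) /
              sin (2 * complex_of_real pi * \<phi>) ^ (n + 2 * g - 2) *
              cot (2 * complex_of_real pi * of_nat K * \<phi>)) 0 = c * (\<Sum>\<mu>\<in>P. a \<mu> * X \<mu>)"
      unfolding c_def P_def a_def X_def AA_def by (rule resF_expand[OF K0])
    have S2: "(\<Sum>\<mu> \<in> ({0..<n} \<rightarrow>\<^sub>E {-1, 1::int}).
              (let A = (\<Sum>j<n. \<mu> j * int (\<alpha> j)) in
              of_int (\<Prod>j<n. \<mu> j) * of_int (sgn A) *
              (\<Sum>m \<in> {m::int. 0 \<le> m \<and> real_of_int m < real_of_int \<bar>A\<bar> / (2 * real K)}.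
                 1 / sigma_m m *
                 residue (\<lambda>\<phi>::complex.
                    exp (2 * complex_of_real pi * \<i> * \<phi> * of_int (sgn A)
                         * of_int (2 * int K * m - \<bar>A\<bar>)) /
                    sin (2 * complex_of_real pi * \<phi>) ^ (n + 2 * g - 2)) 0))) =
          (\<Sum>\<mu>\<in>P. a \<mu> * s \<mu> * Y \<mu>)"
      unfolding P_def a_def s_def Y_def AA_def Ys_def Mset_def Ef_def Sf_def Let_def ..
    have S3: "(\<i> / 2) ^ (n - 1) * (\<Sum>\<mu>\<in>P. a \<mu> * s \<mu> * Y \<mu>) =
              c * (\<Sum>\<mu>\<in>P. a \<mu> * ((-2 * \<i>) * s \<mu> * Y \<mu>))"
    proof (cases "n = 0")
      case True
      hence "s \<mu> = 0" for \<mu> by (simp add: s_def AA_def)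
      thus ?thesis by simp
    next
      case False
      hence "c = (\<i> / 2) ^ (n - 1) * (\<i> / 2)" unfolding c_def by (metis Suc_pred' neq0_conv power_Suc2)
      hence e: "(\<i> / 2) ^ (n - 1) = c * (-2 * \<i>)" by (simp add: field_simps)
      show ?thesis by (simp only: e sum_distrib_left mult.assoc mult.commute mult.left_commute)
    qed
    have brk: "c * (\<Sum>\<mu>\<in>P. a \<mu> * X \<mu>) - c * (\<Sum>\<mu>\<in>P. a \<mu> * ((-2 * \<i>) * s \<mu> * Y \<mu>)) = - W"
    proof -
      have "c * (\<Sum>\<mu>\<in>P. a \<mu> * X \<mu>) - c * (\<Sum>\<mu>\<in>P. a \<mu> * ((-2 * \<i>) * s \<mu> * Y \<mu>)) =
            c * (\<Sum>\<mu>\<in>P. a \<mu> * (X \<mu> - (-2 * \<i>) * s \<mu> * Y \<mu>))"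
        by (simp only: right_diff_distrib sum_subtractf)
      also have "\<dots> = c * (\<Sum>\<mu>\<in>P. a \<mu> * (- Z \<mu>))"
      proof -
        have "X \<mu> - (-2 * \<i>) * s \<mu> * Y \<mu> = - Z \<mu>" if "\<mu> \<in> P" for \<mu>
          using core[OF that] by (simp add: algebra_simps eq_neg_iff_add_eq_0)
        thus ?thesis by (simp cong: sum.cong)
      qed
      also have "\<dots> = - W" by (simp add: W_def sum_negf)
      finally show ?thesis .
    qed
    have L: "complex_of_real (verlinde K g n \<alpha>) =
             complex_of_real ((real K / 2) powi (int g - 1)) * (2 * complex_of_real pi * of_nat K * W)"
    proof -
      have "complex_of_real (verlinde K g n \<alpha>) = complex_of_real ((real K / 2) powi (int g - 1)) *
         complex_of_real (\<Sum>\<beta> = 1..K - 1. (\<Prod>j<n. sin (pi * real \<beta> * real (\<alpha> j) / real K)) /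
            sin (pi * real \<beta> / real K) ^ (n + 2 * g - 2))"
        unfolding verlinde_def by (rule of_real_mult)
      also have "complex_of_real (\<Sum>\<beta> = 1..K - 1. (\<Prod>j<n. sin (pi * real \<beta> * real (\<alpha> j) / real K)) /
            sin (pi * real \<beta> / real K) ^ (n + 2 * g - 2)) = c * (\<Sum>\<mu>\<in>P. a \<mu> * (2 * complex_of_real pi * of_nat K * Z \<mu>))"
        unfolding c_def P_def a_def Z_def AA_def by (rule LHS_expand[OF K0])
      also have "\<dots> = 2 * complex_of_real pi * of_nat K * W"
        by (simp add: W_def sum_distrib_left mult_ac)
      finally show ?thesis .
    qed
    have pw: "(real K / 2) powi (int g - 1) * (2 * pi * real K) = 4 * pi * (real K / 2) ^ g"
    proof -
      have "(real K / 2) powi (int g - 1) = (real K / 2) ^ g / (real K / 2)"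
        using K0 by (subst power_int_diff) auto
      thus ?thesis using K0 by (simp add: field_simps)
    qed
    have pw': "complex_of_real ((real K / 2) powi (int g - 1)) * (2 * complex_of_real pi * of_nat K) =
               4 * complex_of_real pi * complex_of_real ((real K / 2) ^ g)"
    proof -
      have "complex_of_real ((real K / 2) powi (int g - 1) * (2 * pi * real K)) =
            complex_of_real (4 * pi * (real K / 2) ^ g)" by (simp only: pw)
      thus ?thesis by simp
    qed
    show "complex_of_real (verlinde K g n \<alpha>) =
        - 4 * complex_of_real pi * complex_of_real ((real K / 2) ^ g) *
        ( residue (\<lambda>\<phi>::complex.
              (\<Prod>j<n. sin (2 * complex_of_real pi * of_nat (\<alpha> j) * \<phi>)) /
              sin (2 * complex_of_real pi * \<phi>) ^ (n + 2 * g - 2) *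
              cot (2 * complex_of_real pi * of_nat K * \<phi>)) 0
          - (\<i> / 2) ^ (n - 1) *
            (\<Sum>\<mu> \<in> ({0..<n} \<rightarrow>\<^sub>E {-1, 1::int}).
              (let A = (\<Sum>j<n. \<mu> j * int (\<alpha> j)) in
              of_int (\<Prod>j<n. \<mu> j) * of_int (sgn A) *
              (\<Sum>m \<in> {m::int. 0 \<le> m \<and> real_of_int m < real_of_int \<bar>A\<bar> / (2 * real K)}.
                 1 / sigma_m m *
                 residue (\<lambda>\<phi>::complex.
                    exp (2 * complex_of_real pi * \<i> * \<phi> * of_int (sgn A)
                         * of_int (2 * int K * m - \<bar>A\<bar>)) /
                    sin (2 * complex_of_real pi * \<phi>) ^ (n + 2 * g - 2)) 0))))"
      unfolding R1 S2 S3 brk L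
    proof -
      have "complex_of_real ((real K / 2) powi (int g - 1)) * (2 * complex_of_real pi * of_nat K * W) =
            (complex_of_real ((real K / 2) powi (int g - 1)) * (2 * complex_of_real pi * of_nat K)) * W"
        by (simp only: mult.assoc)
      also have "\<dots> = 4 * complex_of_real pi * complex_of_real ((real K / 2) ^ g) * W" by (simp only: pw')
      finally show "complex_of_real ((real K / 2) powi (int g - 1)) * (2 * complex_of_real pi * of_nat K * W) =
            - 4 * complex_of_real pi * complex_of_real ((real K / 2) ^ g) * - W" by simp
    qed
  qed
qed

end
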